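(* Let $P$ be a field, $X=\{x_1,\ldots,x_n\}$ a finite set, and let $W(X)$ be either the free commutative (unital) algebra $P[x_1,\ldots,x_n]$ or the free associative (unital) algebra over $P$ on $X$. Then $W(X)$ is almost central: every bijection $\mu:W(X)\to W(X)$ satisfying $\mu s=s\mu$ for all $s\in\mathrm{End}(W(X))$ is linear, i.e. there exist $a,b\in P$ with $a\neq 0$ such that $\mu(u)=au+b$ for all $u\in W(X)$.
   Context: $\mathrm{End}(W(X))$ denotes the semigroup of all (unital) algebra endomorphisms of $W(X)$. A bijection $\mu$ of $W(X)$ is called central if it commutes with every endomorphism of $W(X)$; an algebra is called almost central if each of its central bijections is of the form $u\mapsto au+b$ with $a,b\in P$, $a\neq0$. *)

theory Defs
  imports Main "HOL-Library.Poly_Mapping"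
begin

(* Free monoid on 'x (words), written additively so that
  ('x fword \<Rightarrow>\<^sub>0 'k) is the free associative unital algebra over 'k on 'x
  (multiplication = convolution w.r.t. concatenation).*)

datatype 'x fword = FWord "'x list"

instantiation fword :: (type) monoid_add
begin
definition zero_fword :: "'x fword" where "zero_fword = FWord []"
fun plus_fword :: "'x fword \<Rightarrow> 'x fword \<Rightarrow> 'x fword" where
  "plus_fword (FWord a) (FWord b) = FWord (a @ b)"
instance
proof
  fix a b c :: "'x fword"
  show "a + b + c = a + (b + c)" by (cases a; cases b; cases c) simp
  show "0 + a = a" by (cases a) (simp add: zero_fword_def)
  show "a + 0 = a" by (cases a) (simp add: zero_fword_def)
qed
end

(* Polynomial-type algebras W = ('m \<Rightarrow>\<^sub>0 'k), 'm a monoid of monomials.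
  Constants: Poly_Mapping.single 0 c; scalar multiplication c\<cdot>u = single 0 c * u.*)

definition alg_end :: "(('m::monoid_add \<Rightarrow>\<^sub>0 'k::field) \<Rightarrow> ('m \<Rightarrow>\<^sub>0 'k)) \<Rightarrow> bool" where
  "alg_end s \<longleftrightarrow>
     (\<forall>u v. s (u + v) = s u + s v) \<and>
     (\<forall>u v. s (u * v) = s u * s v) \<and>
     s 1 = 1 \<and>
     (\<forall>c u. s (Poly_Mapping.single 0 c * u) = Poly_Mapping.single 0 c * s u)"

definition central_bij :: "(('m::monoid_add \<Rightarrow>\<^sub>0 'k::field) \<Rightarrow> ('m \<Rightarrow>\<^sub>0 'k)) \<Rightarrow> bool" where
  "central_bij \<mu> \<longleftrightarrow> bij \<mu> \<and> (\<forall>s. alg_end s \<longrightarrow> \<mu> \<circ> s = s \<circ> \<mu>)"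

definition almost_central :: "('m::monoid_add \<Rightarrow>\<^sub>0 'k::field) itself \<Rightarrow> bool" where
  "almost_central _ \<longleftrightarrow>
     (\<forall>\<mu> :: ('m \<Rightarrow>\<^sub>0 'k) \<Rightarrow> ('m \<Rightarrow>\<^sub>0 'k). central_bij \<mu> \<longrightarrow>
        (\<exists>a b. a \<noteq> 0 \<and> (\<forall>u. \<mu> u = Poly_Mapping.single 0 a * u + Poly_Mapping.single 0 b)))"

end

theory Submission
  imports Defs "HOL-Computational_Algebra.Polynomial"
begin

lemma pm_induct:
  assumes "P 0" and "\<And>f a b. P f \<Longrightarrow> P (f + Poly_Mapping.single a b)"
  shows "P f"
proof (induction f rule: update_induct)
  case const then show ?case using assms(1) .
next
  case (update f a b)
  have "Poly_Mapping.update a b f = f + Poly_Mapping.single a b"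
    using update(1) by (intro poly_mapping_eqI) (auto simp: lookup_update lookup_add lookup_single in_keys_iff)
  then show ?case using assms(2)[OF update(3)] by simp
qed

definition ext :: "('k::field \<Rightarrow> 'r::ring_1) \<Rightarrow> ('m::monoid_add \<Rightarrow> 'r) \<Rightarrow> ('m \<Rightarrow>\<^sub>0 'k) \<Rightarrow> 'r" where
  "ext sc ev p = (\<Sum>m\<in>Poly_Mapping.keys p. sc (Poly_Mapping.lookup p m) * ev m)"

locale extl =
  fixes sc :: "'k::field \<Rightarrow> 'r::ring_1" and ev :: "'m::monoid_add \<Rightarrow> 'r"
  assumes sc_add: "sc (a + b) = sc a + sc b"
    and sc_mult: "sc (a * b) = sc a * sc b"
    and sc_one: "sc 1 = 1"
    and sc_comm: "sc a * ev m = ev m * sc a"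
    and ev_zero: "ev 0 = 1"
    and ev_add: "ev (m + n) = ev m * ev n"
begin

lemma sc_zero: "sc 0 = 0"
  using sc_add[of 0 0] by simp

lemma ext_zero: "ext sc ev 0 = 0"
  by (simp add: ext_def)

lemma ext_single: "ext sc ev (Poly_Mapping.single m c) = sc c * ev m"
  by (cases "c = 0") (simp_all add: ext_def sc_zero)

lemma ext_add: "ext sc ev (p + q) = ext sc ev p + ext sc ev q"
  unfolding ext_def
  by (rule setsum_keys_plus_distrib) (simp_all add: sc_zero sc_add distrib_right)

lemma ext_mult_single: "ext sc ev (Poly_Mapping.single a b * Poly_Mapping.single c d)
   = ext sc ev (Poly_Mapping.single a b) * ext sc ev (Poly_Mapping.single c d)"
proof -
  have "sc b * ev a * (sc d * ev c) = sc b * (ev a * sc d) * ev c" by (simp add: mult.assoc)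
  also have "\<dots> = sc b * (sc d * ev a) * ev c" by (simp add: sc_comm)
  also have "\<dots> = sc b * sc d * (ev a * ev c)" by (simp add: mult.assoc)
  finally show ?thesis by (simp add: mult_single ext_single sc_mult ev_add)
qed

lemma ext_mult_single_left: "ext sc ev (Poly_Mapping.single a b * q)
   = ext sc ev (Poly_Mapping.single a b) * ext sc ev q"
proof (induction q rule: pm_induct)
  case 1 then show ?case by (simp add: ext_zero)
next
  case (2 f c d)
  then show ?case by (simp add: distrib_left ext_add ext_mult_single)
qed

lemma ext_mult: "ext sc ev (p * q) = ext sc ev p * ext sc ev q"
proof (induction p rule: pm_induct)
  case 1 then show ?case by (simp add: ext_zero)
next
  case (2 f c d)
  then show ?case by (simp add: distrib_right ext_add ext_mult_single_left)
qed

lemma ext_one: "ext sc ev 1 = 1"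
  using ext_single[of 0 1] by (simp add: sc_one ev_zero)

lemma ext_power: "ext sc ev (p ^ n) = ext sc ev p ^ n"
  by (induction n) (simp_all add: ext_one ext_mult)

lemma ext_scal: "ext sc ev (Poly_Mapping.single 0 c * u) = sc c * ext sc ev u"
  by (simp add: ext_mult ext_single ev_zero)

end

lemma single0_comm:
  fixes p :: "'m::monoid_add \<Rightarrow>\<^sub>0 'k::field"
  shows "Poly_Mapping.single 0 c * p = p * Poly_Mapping.single 0 c"
proof (induction p rule: pm_induct)
  case 1 then show ?case by simp
next
  case (2 f a b)
  then show ?case by (simp add: distrib_left distrib_right mult_single mult.commute)
qed

definition peval :: "'k::field poly \<Rightarrow> ('m::monoid_add \<Rightarrow>\<^sub>0 'k) \<Rightarrow> ('m \<Rightarrow>\<^sub>0 'k)" where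
  "peval q u = (\<Sum>i\<le>degree q. Poly_Mapping.single 0 (coeff q i) * u ^ i)"

lemma peval_bound:
  assumes "degree q \<le> N"
  shows "peval q u = (\<Sum>i\<le>N. Poly_Mapping.single 0 (coeff q i) * u ^ i)"
  unfolding peval_def
  by (rule sum.mono_neutral_left) (use assms in \<open>auto simp: coeff_eq_0\<close>)

lemma peval_add: "peval (p + q) u = peval p u + peval q u"
proof -
  let ?N = "max (degree p) (degree q)"
  have "degree (p + q) \<le> ?N" by (rule degree_add_le) auto
  then have "peval (p + q) u = (\<Sum>i\<le>?N. Poly_Mapping.single 0 (coeff (p+q) i) * u ^ i)"
    by (rule peval_bound)
  also have "\<dots> = (\<Sum>i\<le>?N. Poly_Mapping.single 0 (coeff p i) * u ^ i)
       + (\<Sum>i\<le>?N. Poly_Mapping.single 0 (coeff q i) * u ^ i)"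
    by (simp add: single_add distrib_right sum.distrib)
  also have "\<dots> = peval p u + peval q u"
    by (simp add: peval_bound[of p ?N] peval_bound[of q ?N])
  finally show ?thesis .
qed

lemma peval_monom: "peval (monom c n) u = Poly_Mapping.single 0 c * u ^ n"
proof -
  have "peval (monom c n) u = (\<Sum>i\<le>n. Poly_Mapping.single 0 (coeff (monom c n) i) * u ^ i)"
    by (rule peval_bound) (simp add: degree_monom_le)
  also have "\<dots> = (\<Sum>i\<le>n. if i = n then Poly_Mapping.single 0 c * u ^ i else 0)"
    by (rule sum.cong) (auto simp: coeff_monom)
  also have "\<dots> = Poly_Mapping.single 0 c * u ^ n" by simp
  finally show ?thesis .
qed

lemma pcompose_power: "pcompose (p ^ n) r = (pcompose p r) ^ n"
  by (induction n) (simp_all add: pcompose_mult pcompose_1)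

lemma main:
  fixes len :: "'m::monoid_add \<Rightarrow> nat" and v :: 'm
  assumes len0: "len 0 = 0" and lenadd: "\<And>a b. len (a+b) = len a + len b" and lenv: "len v = 1"
  shows "almost_central TYPE('m \<Rightarrow>\<^sub>0 'k::field)"
  unfolding almost_central_def
proof (intro allI impI)
  fix \<mu> :: "('m \<Rightarrow>\<^sub>0 'k) \<Rightarrow> ('m \<Rightarrow>\<^sub>0 'k)"
  assume cb: "central_bij \<mu>"
  define E where "E u = ext (\<lambda>c. Poly_Mapping.single 0 c) (\<lambda>m. u ^ len m)" for u :: "'m \<Rightarrow>\<^sub>0 'k"
  define C where "C = ext (\<lambda>c. [:c:]) (\<lambda>m. [:0,1::'k:] ^ len m)"
  define x where "x = Poly_Mapping.single v (1::'k)"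
  have extE: "extl (\<lambda>c. Poly_Mapping.single 0 c) (\<lambda>m. u ^ len m)" for u :: "'m \<Rightarrow>\<^sub>0 'k"
    by unfold_locales (simp_all add: single_add mult_single len0 lenadd power_add single0_comm[of _ "u ^ _"])
  have extC: "extl (\<lambda>c. [:c:]) (\<lambda>m. [:0,1::'k:] ^ len m)"
    by unfold_locales (simp_all add: len0 lenadd power_add mult.commute)
  have endE: "alg_end (E u)" for u
    unfolding alg_end_def E_def
    using extl.ext_add[OF extE] extl.ext_mult[OF extE] extl.ext_one[OF extE] extl.ext_scal[OF extE]
    by blast
  have Ex: "E u x = u" for u
    unfolding E_def x_def using extl.ext_single[OF extE] by (simp add: lenv)
  have Cx: "C x = [:0,1:]"
    unfolding C_def x_def using extl.ext_single[OF extC] by (simp add: lenv)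
  have mu: "\<mu> u = E u (\<mu> x)" for u
  proof -
    have "\<mu> \<circ> E u = E u \<circ> \<mu>" using cb endE unfolding central_bij_def by blast
    then have "\<mu> (E u x) = E u (\<mu> x)" by (metis comp_apply)
    then show ?thesis by (simp add: Ex)
  qed
  have Csingle: "C (Poly_Mapping.single m c) = monom c (len m)" for m c
    unfolding C_def using extl.ext_single[OF extC] by (simp add: monom_altdef)
  have CE: "C (E u f) = pcompose (C f) (C u)" for f u
  proof (induction f rule: pm_induct)
    case 1 then show ?case
      by (simp add: C_def E_def extl.ext_zero[OF extC] extl.ext_zero[OF extE])
  next
    case (2 f a b)
    have "C (E u (Poly_Mapping.single a b)) = [:b:] * C u ^ len a"
      unfolding C_def E_def
      by (simp add: extl.ext_single[OF extE] extl.ext_mult[OF extC] extl.ext_power[OF extC]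
          extl.ext_single[OF extC] len0)
    also have "\<dots> = pcompose (C (Poly_Mapping.single a b)) (C u)"
      by (simp add: Csingle monom_altdef pcompose_smult pcompose_power pcompose_pCons)
    finally show ?case using 2
      by (simp add: C_def E_def extl.ext_add[OF extC] extl.ext_add[OF extE] pcompose_add)
  qed
  have CA: "C (f + g) = C f + C g" for f g
    unfolding C_def by (rule extl.ext_add[OF extC])
  have EP: "E u f = peval (C f) u" for f u
  proof (induction f rule: pm_induct)
    case 1 then show ?case
      by (simp add: C_def E_def extl.ext_zero[OF extC] extl.ext_zero[OF extE] peval_def)
  next
    case (2 f a b)
    then show ?case
      by (simp add: CA E_def extl.ext_add[OF extE] peval_add
         extl.ext_single[OF extE] peval_monom Csingle)
  qed
  define q where "q = C (\<mu> x)"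
  from cb have "surj \<mu>" unfolding central_bij_def bij_def by blast
  then obtain u where u: "\<mu> u = x" by (metis surjD)
  have "[:0,1:] = C (\<mu> u)" using Cx u by simp
  also have "\<dots> = pcompose q (C u)" using mu[of u] CE q_def by simp
  finally have "degree q * degree (C u) = degree [:0,1::'k:]" by (simp add: degree_pcompose)
  then have "degree q * degree (C u) = 1" by simp
  then have dq: "degree q = 1" by simp
  then have "q \<noteq> 0" by auto
  then have "lead_coeff q \<noteq> 0" by simp
  then have a: "coeff q 1 \<noteq> 0" using dq by simp
  have "\<mu> w = Poly_Mapping.single 0 (coeff q 1) * w + Poly_Mapping.single 0 (coeff q 0)" for w
  proof -
    have "\<mu> w = E w (\<mu> x)" by (rule mu)
    also have "\<dots> = peval q w" by (simp only: EP q_def)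
    also have "\<dots> = Poly_Mapping.single 0 (coeff q 1) * w + Poly_Mapping.single 0 (coeff q 0)"
      unfolding peval_def dq by (simp add: atMost_Suc add.commute)
    finally show ?thesis .
  qed
  with a show "\<exists>a b. a \<noteq> 0 \<and> (\<forall>u. \<mu> u = Poly_Mapping.single 0 a * u + Poly_Mapping.single 0 b)"
    by blast
qed

lemma comm_case: "almost_central TYPE((('x::finite \<Rightarrow>\<^sub>0 nat) \<Rightarrow>\<^sub>0 'k::field))"
proof (rule main[where len = "\<lambda>m. sum (Poly_Mapping.lookup m) UNIV"
      and v = "Poly_Mapping.single undefined 1"])
  show "(\<Sum>x\<in>UNIV. Poly_Mapping.lookup (0::'x \<Rightarrow>\<^sub>0 nat) x) = 0" by simp
  show "(\<Sum>x\<in>UNIV. Poly_Mapping.lookup (a + b) x) =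
        (\<Sum>x\<in>UNIV. Poly_Mapping.lookup a x) + (\<Sum>x\<in>UNIV. Poly_Mapping.lookup b x)"
    for a b :: "'x \<Rightarrow>\<^sub>0 nat" by (simp add: lookup_add sum.distrib)
  show "(\<Sum>x\<in>UNIV. Poly_Mapping.lookup (Poly_Mapping.single (undefined::'x) (1::nat)) x) = 1"
    by (simp add: lookup_single when_def)
qed

fun fwlen :: "'x fword \<Rightarrow> nat" where "fwlen (FWord l) = length l"

lemma free_case: "almost_central TYPE(('x fword \<Rightarrow>\<^sub>0 'k::field))"
proof (rule main[where len = fwlen and v = "FWord [undefined]"])
  show "fwlen (0::'x fword) = 0" by (simp add: zero_fword_def)
  show "fwlen (a + b) = fwlen a + fwlen b" for a b :: "'x fword"
    by (cases a; cases b) simp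
  show "fwlen (FWord [undefined::'x]) = 1" by simp
qed

theorem theorem2:
  shows "almost_central TYPE((('x::finite \<Rightarrow>\<^sub>0 nat) \<Rightarrow>\<^sub>0 'k::field))
       \<and> almost_central TYPE(('x fword \<Rightarrow>\<^sub>0 'k))"
  using comm_case free_case by blast

end
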